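(* Let $f_k:(0,\infty)\to[0,\infty)$, $k=1,\dots,r$, and real numbers $a_0<a_1$ satisfy $[a_0,a_1]\subset\bigcap_{k=1}^rD(M_{f_k})$. For $a\in[a_0,a_1]$ let $X_1,\dots,X_r$ be independent with $X_k\sim m_{f_k}(a)$, and let $\mathbb{E}^a$, $\mathrm{Cov}^a$ denote expectation and covariance under the corresponding product measure. Let $S=\sum_{k=1}^r\log X_k$ and let $A:\mathbb{R}^r\to\mathbb{R}$ be measurable with $\mathbb{E}^a[A(X_1,\dots,X_r)^2]<\infty$ for all $a\in[a_0,a_1]$. Then \[ \frac{\partial}{\partial a}\mathbb{E}^a[A(X_1,\dots,X_r)]=\mathrm{Cov}^a\big(A(X_1,\dots,X_r),S\big)\quad\text{for all }a\in(a_0,a_1), \] and the map $(a_0,a_1)\ni a\mapsto\frac{\partial}{\partial a}\mathbb{E}^a[A(X_1,\dots,X_r)]$ is continuous.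
   Context: Mellin framework: for $f:(0,\infty)\to[0,\infty)$, $M_f(a)=\int_0^\infty x^{a-1}f(x)\,dx$; $D(M_f)$ is the interior of $\{a\in\mathbb{R}:0<M_f(a)<\infty\}$; for $a\in D(M_f)$, $X\sim m_f(a)$ means $X$ has density $M_f(a)^{-1}x^{a-1}f(x)$ on $(0,\infty)$. *)

theory Defs
  imports "HOL-Probability.Probability"
begin

definition mellin :: "(real \<Rightarrow> real) \<Rightarrow> real \<Rightarrow> ennreal" where
  "mellin f a = (\<integral>\<^sup>+ x. ennreal (indicator {0<..} x * (x powr (a - 1) * f x)) \<partial>lborel)"

definition mellin_dom :: "(real \<Rightarrow> real) \<Rightarrow> real set" where
  "mellin_dom f = interior {a. 0 < mellin f a \<and> mellin f a < \<infinity>}"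

definition mellin_dist :: "(real \<Rightarrow> real) \<Rightarrow> real \<Rightarrow> real measure" where
  "mellin_dist f a = density lborel
     (\<lambda>x. ennreal (indicator {0<..} x * (x powr (a - 1) * f x) / enn2real (mellin f a)))"

text \<open>Joint law of independent X_1..X_r with X_k ~ m_{f_k}(a): the product measure.\<close>
definition mellin_prod :: "nat \<Rightarrow> (nat \<Rightarrow> real \<Rightarrow> real) \<Rightarrow> real \<Rightarrow> (nat \<Rightarrow> real) measure" where
  "mellin_prod r f a = PiM {1..r} (\<lambda>k. mellin_dist (f k) a)"

definition covariance :: "'a measure \<Rightarrow> ('a \<Rightarrow> real) \<Rightarrow> ('a \<Rightarrow> real) \<Rightarrow> real" where
  "covariance M U V =
     (\<integral>x. (U x - (\<integral>y. U y \<partial>M)) * (V x - (\<integral>y. V y \<partial>M)) \<partial>M)"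

end

theory Submission
  imports Defs
begin

lemma exp_le_two:
  fixes t a b s :: real
  assumes "a \<le> t" "t \<le> b"
  shows "exp (t * s) \<le> exp (a * s) + exp (b * s)"
proof (cases "s \<ge> 0")
  case True
  then have "t * s \<le> b * s" using assms by (simp add: mult_right_mono)
  then have "exp (t * s) \<le> exp (b * s)" by simp
  then show ?thesis by (smt (verit) exp_gt_zero)
next
  case False
  then have "t * s \<le> a * s" using assms by (simp add: mult_right_mono_neg)
  then have "exp (t * s) \<le> exp (a * s)" by simp
  then show ?thesis by (smt (verit) exp_gt_zero)
qed

lemma exp_minus_one_bound:
  fixes y :: real
  shows "\<bar>exp y - 1\<bar> \<le> \<bar>y\<bar> * exp \<bar>y\<bar>"
proof (cases "y \<ge> 0")
  case True
  have "1 - y \<le> exp (-y)" using exp_ge_add_one_self[of "-y"] by simp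
  then have "(1 - y) * exp y \<le> exp (-y) * exp y" by (simp add: mult_right_mono)
  then have "exp y - y * exp y \<le> 1" by (simp add: exp_minus field_simps)
  moreover have "exp y \<ge> 1" using True by simp
  ultimately show ?thesis using True by simp
next
  case False
  have "1 + y \<le> exp y" by (rule exp_ge_add_one_self)
  moreover have "exp y \<le> 1" using False by simp
  moreover have "\<bar>y\<bar> \<le> \<bar>y\<bar> * exp \<bar>y\<bar>" using mult_left_mono[of 1 "exp \<bar>y\<bar>" "\<bar>y\<bar>"] by simp
  ultimately show ?thesis using False by linarith
qed

lemma abs_exp_le: 
  fixes s d :: real assumes "d > 0"
  shows "\<bar>s\<bar> * exp (d * \<bar>s\<bar>) \<le> exp (2 * d * \<bar>s\<bar>) / d"
proof -
  have "d * \<bar>s\<bar> \<le> exp (d * \<bar>s\<bar>)" using exp_ge_add_one_self[of "d * \<bar>s\<bar>"] by linarith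
  then have "d * \<bar>s\<bar> * exp (d * \<bar>s\<bar>) \<le> exp (d * \<bar>s\<bar>) * exp (d * \<bar>s\<bar>)"
    by (simp add: mult_right_mono)
  also have "\<dots> = exp (2 * d * \<bar>s\<bar>)" by (simp add: exp_add[symmetric])
  finally show ?thesis using assms by (simp add: field_simps)
qed

lemma qbound:
  fixes a b c h s d :: real
  assumes "d > 0" "\<bar>h\<bar> < d" "a \<le> c - 2 * d" "c + 2 * d \<le> b"
  shows "\<bar>exp ((c+h) * s) - exp (c * s)\<bar> \<le> \<bar>h\<bar> * ((exp (a * s) + exp (b * s)) / d)"
proof -
  have "exp ((c+h) * s) - exp (c * s) = exp (c * s) * (exp (h * s) - 1)"
    by (simp add: distrib_right exp_add field_simps)
  then have "\<bar>exp ((c+h) * s) - exp (c * s)\<bar> = exp (c * s) * \<bar>exp (h * s) - 1\<bar>"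
    by (simp add: abs_mult)
  also have "\<dots> \<le> exp (c * s) * (\<bar>h * s\<bar> * exp \<bar>h * s\<bar>)"
    by (intro mult_left_mono exp_minus_one_bound) simp
  also have "\<dots> \<le> exp (c * s) * (\<bar>h\<bar> * (\<bar>s\<bar> * exp (d * \<bar>s\<bar>)))"
  proof -
    have "\<bar>h * s\<bar> \<le> d * \<bar>s\<bar>" using assms by (simp add: abs_mult mult_right_mono)
    then have "exp \<bar>h * s\<bar> \<le> exp (d * \<bar>s\<bar>)" by simp
    then have "\<bar>h * s\<bar> * exp \<bar>h * s\<bar> \<le> \<bar>h * s\<bar> * exp (d * \<bar>s\<bar>)"
      by (rule mult_left_mono) simp
    then have "\<bar>h * s\<bar> * exp \<bar>h * s\<bar> \<le> \<bar>h\<bar> * (\<bar>s\<bar> * exp (d * \<bar>s\<bar>))"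
      by (simp add: abs_mult)
    then show ?thesis by (simp add: mult_left_mono)
  qed
  also have "\<dots> \<le> exp (c * s) * (\<bar>h\<bar> * (exp (2 * d * \<bar>s\<bar>) / d))"
    using abs_exp_le[OF assms(1), of s] by (intro mult_left_mono) auto
  also have "\<dots> = \<bar>h\<bar> * (exp (c * s + 2 * d*\<bar>s\<bar>) / d)"
    by (simp add: exp_add)
  also have "\<dots> \<le> \<bar>h\<bar> * ((exp (a * s) + exp (b * s)) / d)"
  proof -
    have "exp (c * s + 2 * d*\<bar>s\<bar>) \<le> exp (a * s) + exp (b * s)"
    proof (cases "s \<ge> 0")
      case True
      then have "c * s + 2 * d*\<bar>s\<bar> = (c+2 * d) * s" by (simp add: algebra_simps)
      then show ?thesis using exp_le_two[of a "c+2 * d" b s] assms by simp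
    next
      case False
      then have "c * s + 2 * d*\<bar>s\<bar> = (c-2 * d) * s" by (simp add: algebra_simps)
      then show ?thesis using exp_le_two[of a "c-2 * d" b s] assms by simp
    qed
    then show ?thesis using assms by (intro mult_left_mono divide_right_mono) auto
  qed
  finally show ?thesis .
qed

lemma exp_shift_le:
  fixes a b c s d :: real
  assumes "d > 0" "a \<le> c - 2 * d" "c + 2 * d \<le> b"
  shows "exp (c * s + 2 * d * \<bar>s\<bar>) \<le> exp (a * s) + exp (b * s)"
proof (cases "s \<ge> 0")
  case True
  then have "c * s + 2 * d * \<bar>s\<bar> = (c + 2 * d) * s" by (simp add: algebra_simps)
  then show ?thesis using exp_le_two[of a "c + 2 * d" b s] assms by simp
next
  case False
  then have "c * s + 2 * d * \<bar>s\<bar> = (c - 2 * d) * s" by (simp add: algebra_simps)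
  then show ?thesis using exp_le_two[of a "c - 2 * d" b s] assms by simp
qed

lemma s_bound:
  fixes a b c s d :: real
  assumes "d > 0" "a \<le> c - 2 * d" "c + 2 * d \<le> b"
  shows "\<bar>s\<bar> * exp (c * s) \<le> (exp (a * s) + exp (b * s)) / d"
proof -
  have "\<bar>s\<bar> \<le> \<bar>s\<bar> * exp (d * \<bar>s\<bar>)" using mult_left_mono[of 1 "exp (d * \<bar>s\<bar>)" "\<bar>s\<bar>"] assms by simp
  also have "\<dots> \<le> exp (2 * d * \<bar>s\<bar>) / d" by (rule abs_exp_le[OF assms(1)])
  finally have "\<bar>s\<bar> \<le> exp (2 * d * \<bar>s\<bar>) / d" .
  then have "\<bar>s\<bar> * exp (c * s) \<le> exp (2 * d * \<bar>s\<bar>) / d * exp (c * s)" by (rule mult_right_mono) simp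
  also have "\<dots> = exp (c * s + 2 * d * \<bar>s\<bar>) / d" by (simp add: exp_add)
  also have "\<dots> \<le> (exp (a * s) + exp (b * s)) / d"
    using exp_shift_le[OF assms] assms(1) by (simp add: divide_right_mono)
  finally show ?thesis .
qed

lemma dc_at:
  fixes s :: "real \<Rightarrow> 'a \<Rightarrow> real" and f w :: "'a \<Rightarrow> real"
  assumes "f \<in> borel_measurable M" "\<And>t. t \<in> U \<Longrightarrow> s t \<in> borel_measurable M" "integrable M w"
    "\<And>x. x \<in> space M \<Longrightarrow> ((\<lambda>t. s t x) \<longlongrightarrow> f x) (at t0 within U)"
    "\<And>t x. t \<in> U \<Longrightarrow> x \<in> space M \<Longrightarrow> \<bar>s t x\<bar> \<le> w x"
  shows "((\<lambda>t. \<integral>x. s t x \<partial>M) \<longlongrightarrow> (\<integral>x. f x \<partial>M)) (at t0 within U)"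
proof (subst tendsto_at_iff_sequentially, intro allI impI)
  fix X :: "nat \<Rightarrow> real" assume X: "\<forall>i. X i \<in> U - {t0}" "X \<longlonglongrightarrow> t0"
  show "((\<lambda>t. \<integral>x. s t x \<partial>M) \<circ> X) \<longlonglongrightarrow> (\<integral>x. f x \<partial>M)"
    unfolding comp_def
  proof (rule integral_dominated_convergence[where w=w])
    show "AE x in M. (\<lambda>i. s (X i) x) \<longlonglongrightarrow> f x"
    proof (rule AE_I2)
      fix x assume x: "x \<in> space M"
      have "((\<lambda>t. s t x) \<circ> X) \<longlonglongrightarrow> f x"
        using assms(4)[OF x] X tendsto_at_iff_sequentially by blast
      then show "(\<lambda>i. s (X i) x) \<longlonglongrightarrow> f x" by (simp add: comp_def)
    qed
    show "AE x in M. norm (s (X i) x) \<le> w x" for i using X assms(5) by (intro AE_I2) auto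
  qed (use X assms in auto)
qed

lemma int_between:
  fixes w S :: "'a \<Rightarrow> real"
  assumes [measurable]: "w \<in> borel_measurable M" "S \<in> borel_measurable M"
    and ia: "integrable M (\<lambda>x. \<bar>w x\<bar> * exp (a * S x))"
    and ib: "integrable M (\<lambda>x. \<bar>w x\<bar> * exp (b * S x))"
    and "a \<le> t" "t \<le> b"
  shows "integrable M (\<lambda>x. \<bar>w x\<bar> * exp (t * S x))"
proof (rule Bochner_Integration.integrable_bound[OF Bochner_Integration.integrable_add[OF ia ib]])
  show "(\<lambda>x. \<bar>w x\<bar> * exp (t * S x)) \<in> borel_measurable M" by measurable
  show "AE x in M. norm (\<bar>w x\<bar> * exp (t * S x)) \<le> norm (\<bar>w x\<bar> * exp (a * S x) + \<bar>w x\<bar> * exp (b * S x))"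
  proof (rule AE_I2)
    fix x
    have "\<bar>w x\<bar> * exp (t * S x) \<le> \<bar>w x\<bar> * (exp (a * S x) + exp (b * S x))"
      by (intro mult_left_mono exp_le_two) (use assms in auto)
    then show "norm (\<bar>w x\<bar> * exp (t * S x)) \<le> norm (\<bar>w x\<bar> * exp (a * S x) + \<bar>w x\<bar> * exp (b * S x))"
      by (simp add: distrib_left)
  qed
qed

lemma int_between':
  fixes w S :: "'a \<Rightarrow> real"
  assumes [measurable]: "w \<in> borel_measurable M" "S \<in> borel_measurable M"
    and ia: "integrable M (\<lambda>x. \<bar>w x\<bar> * exp (a * S x))"
    and ib: "integrable M (\<lambda>x. \<bar>w x\<bar> * exp (b * S x))"
    and "a \<le> t" "t \<le> b"
  shows "integrable M (\<lambda>x. w x * exp (t * S x))"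
proof -
  have "integrable M (\<lambda>x. \<bar>w x * exp (t * S x)\<bar>)"
    using int_between[OF assms] by (simp add: abs_mult)
  then show ?thesis by (subst (asm) integrable_abs_iff) auto
qed

lemma intS:
  fixes w S :: "'a \<Rightarrow> real"
  assumes [measurable]: "w \<in> borel_measurable M" "S \<in> borel_measurable M"
    and ia: "integrable M (\<lambda>x. \<bar>w x\<bar> * exp (a * S x))"
    and ib: "integrable M (\<lambda>x. \<bar>w x\<bar> * exp (b * S x))"
    and "a < t" "t < b"
  shows "integrable M (\<lambda>x. \<bar>w x * S x\<bar> * exp (t * S x))"
proof -
  define d where "d = min (t - a) (b - t) / 2"
  have d: "d > 0" "a \<le> t - 2 * d" "t + 2 * d \<le> b" using assms by (auto simp: d_def)
  show ?thesis
  proof (rule Bochner_Integration.integrable_bound[OF integrable_divide[OF Bochner_Integration.integrable_add[OF ia ib], of d]])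
    show "(\<lambda>x. \<bar>w x * S x\<bar> * exp (t * S x)) \<in> borel_measurable M" by measurable
    show "AE x in M. norm (\<bar>w x * S x\<bar> * exp (t * S x)) \<le> norm ((\<bar>w x\<bar> * exp (a * S x) + \<bar>w x\<bar> * exp (b * S x)) / d)"
    proof (rule AE_I2)
      fix x
      have "\<bar>w x\<bar> * (\<bar>S x\<bar> * exp (t * S x)) \<le> \<bar>w x\<bar> * ((exp (a * S x) + exp (b * S x)) / d)"
        by (intro mult_left_mono s_bound d) auto
      moreover have "0 \<le> (\<bar>w x\<bar> * exp (a * S x) + \<bar>w x\<bar> * exp (b * S x)) / d" using d by auto
      ultimately show "norm (\<bar>w x * S x\<bar> * exp (t * S x)) \<le> norm ((\<bar>w x\<bar> * exp (a * S x) + \<bar>w x\<bar> * exp (b * S x)) / d)"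
        by (simp add: distrib_left abs_mult mult.assoc add_divide_distrib)
    qed
  qed
qed

lemma deriv_int:
  fixes w S :: "'a \<Rightarrow> real"
  assumes [measurable]: "w \<in> borel_measurable M" "S \<in> borel_measurable M"
    and ia: "integrable M (\<lambda>x. \<bar>w x\<bar> * exp (a * S x))"
    and ib: "integrable M (\<lambda>x. \<bar>w x\<bar> * exp (b * S x))"
    and "a < c" "c < b"
  shows "((\<lambda>t. \<integral>x. w x * exp (t * S x) \<partial>M) has_real_derivative
           (\<integral>x. w x * S x * exp (c * S x) \<partial>M)) (at c)"
proof -
  define d where "d = min (c - a) (b - c) / 2"
  have d: "d > 0" "a \<le> c - 2 * d" "c + 2 * d \<le> b" using assms by (auto simp: d_def)
  have int: "integrable M (\<lambda>x. w x * exp (t * S x))" if "a \<le> t" "t \<le> b" for t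
    using int_between'[OF assms(1-4) that] .
  define U where "U = {-d<..<d}"
  have lim: "((\<lambda>h. \<integral>x. w x * ((exp ((c + h) * S x) - exp (c * S x)) / h) \<partial>M) \<longlongrightarrow>
      (\<integral>x. w x * S x * exp (c * S x) \<partial>M)) (at 0 within U)"
  proof (rule dc_at[where w="\<lambda>x. (\<bar>w x\<bar> * exp (a * S x) + \<bar>w x\<bar> * exp (b * S x)) / d"])
    show "integrable M (\<lambda>x. (\<bar>w x\<bar> * exp (a * S x) + \<bar>w x\<bar> * exp (b * S x)) / d)"
      by (intro integrable_divide Bochner_Integration.integrable_add ia ib)
    show "(\<lambda>x. w x * S x * exp (c * S x)) \<in> borel_measurable M" by measurable
    show "(\<lambda>x. w x * ((exp ((c + h) * S x) - exp (c * S x)) / h)) \<in> borel_measurable M" for h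
      by measurable
    show "((\<lambda>h. w x * ((exp ((c + h) * S x) - exp (c * S x)) / h)) \<longlongrightarrow> w x * S x * exp (c * S x)) (at 0 within U)"
      for x
    proof -
      have "((\<lambda>t. exp (t * S x)) has_real_derivative exp (c * S x) * S x) (at c)"
        by (auto intro!: derivative_eq_intros)
      then have "((\<lambda>h. (exp ((c + h) * S x) - exp (c * S x)) / h) \<longlongrightarrow> exp (c * S x) * S x) (at 0)"
        unfolding DERIV_def .
      then have "((\<lambda>h. w x * ((exp ((c + h) * S x) - exp (c * S x)) / h)) \<longlongrightarrow> w x * (exp (c * S x) * S x)) (at 0)"
        by (intro tendsto_mult_left)
      then show ?thesis by (auto intro: tendsto_within_subset simp: ac_simps)
    qed
    show "\<bar>w x * ((exp ((c + h) * S x) - exp (c * S x)) / h)\<bar> \<le> (\<bar>w x\<bar> * exp (a * S x) + \<bar>w x\<bar> * exp (b * S x)) / d"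
      if h: "h \<in> U" for h x
    proof (cases "h = 0")
      case True then show ?thesis using d by auto
    next
      case False
      have "\<bar>exp ((c + h) * S x) - exp (c * S x)\<bar> \<le> \<bar>h\<bar> * ((exp (a * S x) + exp (b * S x)) / d)"
        using h d by (intro qbound) (auto simp: U_def)
      then have "\<bar>exp ((c + h) * S x) - exp (c * S x)\<bar> / \<bar>h\<bar> \<le> (exp (a * S x) + exp (b * S x)) / d"
        using False by (simp add: divide_le_eq mult.commute)
      then have "\<bar>w x\<bar> * (\<bar>exp ((c + h) * S x) - exp (c * S x)\<bar> / \<bar>h\<bar>) \<le> \<bar>w x\<bar> * ((exp (a * S x) + exp (b * S x)) / d)"
        by (rule mult_left_mono) simp
      then show ?thesis by (simp add: abs_mult distrib_left add_divide_distrib)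
    qed
  qed
  have "open U" "0 \<in> U" using d by (auto simp: U_def)
  then have lim2: "((\<lambda>h. \<integral>x. w x * ((exp ((c + h) * S x) - exp (c * S x)) / h) \<partial>M) \<longlongrightarrow>
      (\<integral>x. w x * S x * exp (c * S x) \<partial>M)) (at 0)"
    using lim at_within_open[of 0 U] by simp
  have ev: "\<forall>\<^sub>F h in at 0. (\<integral>x. w x * ((exp ((c + h) * S x) - exp (c * S x)) / h) \<partial>M) =
      ((\<integral>x. w x * exp ((c + h) * S x) \<partial>M) - (\<integral>x. w x * exp (c * S x) \<partial>M)) / h"
  proof -
    have "\<forall>\<^sub>F h in at 0. h \<in> U" using \<open>open U\<close> \<open>0 \<in> U\<close> eventually_at_topological by blast
    then show ?thesis
    proof eventually_elim
      case (elim h)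
      then have h: "a \<le> c + h" "c + h \<le> b" using d by (auto simp: U_def)
      have "(\<integral>x. w x * ((exp ((c + h) * S x) - exp (c * S x)) / h) \<partial>M) =
          (\<integral>x. (w x * exp ((c + h) * S x) - w x * exp (c * S x)) / h \<partial>M)"
        by (simp add: right_diff_distrib)
      also have "\<dots> = (\<integral>x. (w x * exp ((c + h) * S x) - w x * exp (c * S x)) \<partial>M) / h"
        by simp
      also have "\<dots> = ((\<integral>x. w x * exp ((c + h) * S x) \<partial>M) - (\<integral>x. w x * exp (c * S x) \<partial>M)) / h"
        using int[OF h] int[of c] assms by (subst Bochner_Integration.integral_diff) auto
      finally show ?case .
    qed
  qed
  show ?thesis unfolding DERIV_def
    using tendsto_cong[OF ev] lim2 by simp
qed

lemma PiM_density_all: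
  fixes M :: "'i \<Rightarrow> 'b measure"
  assumes fin: "finite I" and P: "\<And>i. prob_space (M i)"
    and h: "\<And>i. h i \<in> borel_measurable (M i)"
    and Pd: "\<And>i. prob_space (density (M i) (h i))"
  shows "density (PiM I M) (\<lambda>x. \<Prod>i\<in>I. h i (x i)) = PiM I (\<lambda>i. density (M i) (h i))"
proof -
  interpret D: product_sigma_finite "\<lambda>i. density (M i) (h i)"
    unfolding product_sigma_finite_def using Pd by (auto intro: prob_space_imp_sigma_finite)
  interpret M: product_sigma_finite M
    unfolding product_sigma_finite_def using P by (auto intro: prob_space_imp_sigma_finite)
  have Hm: "(\<lambda>x. \<Prod>i\<in>I. h i (x i)) \<in> borel_measurable (PiM I M)"
    by (intro borel_measurable_prod_ennreal
              measurable_comp[OF measurable_component_singleton, unfolded comp_def] h) auto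
  show ?thesis
  proof (rule D.PiM_eqI[OF fin])
    show "sets (density (PiM I M) (\<lambda>x. \<Prod>i\<in>I. h i (x i))) = sets (PiM I (\<lambda>i. density (M i) (h i)))"
      unfolding sets_density by (rule sets_PiM_cong) auto
    fix A assume A: "\<And>i. i \<in> I \<Longrightarrow> A i \<in> sets (density (M i) (h i))"
    then have A': "\<And>i. i \<in> I \<Longrightarrow> A i \<in> sets (M i)" by simp
    have PA: "Pi\<^sub>E I A \<in> sets (PiM I M)" using A' fin by (intro sets_PiM_I_finite) auto
    have "emeasure (density (PiM I M) (\<lambda>x. \<Prod>i\<in>I. h i (x i))) (Pi\<^sub>E I A) =
        (\<integral>\<^sup>+ x. (\<Prod>i\<in>I. h i (x i)) * indicator (Pi\<^sub>E I A) x \<partial>PiM I M)"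
      by (rule emeasure_density[OF Hm PA])
    also have "\<dots> = (\<integral>\<^sup>+ x. (\<Prod>i\<in>I. h i (x i) * indicator (A i) (x i)) \<partial>PiM I M)"
    proof (rule nn_integral_cong)
      fix x assume "x \<in> space (PiM I M)"
      then have x: "x \<in> Pi\<^sub>E I (\<lambda>i. space (M i))" by (simp add: space_PiM)
      show "(\<Prod>i\<in>I. h i (x i)) * indicator (Pi\<^sub>E I A) x = (\<Prod>i\<in>I. h i (x i) * indicator (A i) (x i))"
      proof (cases "\<forall>i\<in>I. x i \<in> A i")
        case True
        then have "x \<in> Pi\<^sub>E I A" using x by (auto simp: PiE_def)
        then show ?thesis using True by (simp add: prod.distrib)
      next
        case False
        then obtain j where j: "j \<in> I" "x j \<notin> A j" by auto
        then have "x \<notin> Pi\<^sub>E I A" by auto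
        moreover have "(\<Prod>i\<in>I. h i (x i) * indicator (A i) (x i)) = 0"
          using j fin by (intro prod_zero) (auto intro!: bexI[of _ j])
        ultimately show ?thesis by simp
      qed
    qed
    also have "\<dots> = (\<Prod>i\<in>I. \<integral>\<^sup>+ y. h i y * indicator (A i) y \<partial>M i)"
      using A' by (intro M.product_nn_integral_prod fin borel_measurable_times_ennreal h borel_measurable_indicator)
    also have "\<dots> = (\<Prod>i\<in>I. emeasure (density (M i) (h i)) (A i))"
      using A' by (intro prod.cong refl emeasure_density[symmetric] h) auto
    finally show "emeasure (density (PiM I M) (\<lambda>x. \<Prod>i\<in>I. h i (x i))) (Pi\<^sub>E I A) =
        (\<Prod>i\<in>I. emeasure (density (M i) (h i)) (A i))" .
  qed
qed

lemma PiM_density: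
  fixes M :: "'i \<Rightarrow> real measure"
  assumes fin: "finite I" and P: "\<And>i. i \<in> I \<Longrightarrow> prob_space (M i)"
    and h: "\<And>i. i \<in> I \<Longrightarrow> h i \<in> borel_measurable (M i)"
    and Pd: "\<And>i. i \<in> I \<Longrightarrow> prob_space (density (M i) (h i))"
  shows "PiM I (\<lambda>i. density (M i) (h i)) = density (PiM I M) (\<lambda>x. \<Prod>i\<in>I. h i (x i))"
proof -
  define M' where "M' i = (if i \<in> I then M i else return borel 0)" for i
  define h' where "h' i = (if i \<in> I then h i else (\<lambda>_. 1))" for i
  have "density (PiM I M') (\<lambda>x. \<Prod>i\<in>I. h' i (x i)) = PiM I (\<lambda>i. density (M' i) (h' i))"
  proof (rule PiM_density_all[OF fin])
    show "prob_space (M' i)" for i using P by (auto simp: M'_def intro: prob_space_return)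
    show "h' i \<in> borel_measurable (M' i)" for i using h by (auto simp: M'_def h'_def)
    show "prob_space (density (M' i) (h' i))" for i
      using Pd by (auto simp: M'_def h'_def density_1 intro: prob_space_return)
  qed
  moreover have "PiM I M' = PiM I M" by (rule PiM_cong) (auto simp: M'_def)
  moreover have "PiM I (\<lambda>i. density (M' i) (h' i)) = PiM I (\<lambda>i. density (M i) (h i))"
    by (rule PiM_cong) (auto simp: M'_def h'_def)
  moreover have "(\<lambda>x. \<Prod>i\<in>I. h' i (x i)) = (\<lambda>x. \<Prod>i\<in>I. h i (x i))"
    by (auto simp: h'_def intro!: prod.cong)
  ultimately show ?thesis by simp
qed

lemma mellin_F_nonneg:
  assumes "\<And>x. 0 < x \<Longrightarrow> 0 \<le> f x"
  shows "0 \<le> indicator {0<..} x * (x powr (a - 1) * (f x :: real))"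
  using assms by (cases "0 < x") auto

lemma mellin_facts:
  fixes f :: "real \<Rightarrow> real"
  assumes fm[measurable]: "f \<in> borel_measurable borel" and fn: "\<And>x. 0 < x \<Longrightarrow> 0 \<le> f x"
    and mp: "0 < mellin f a" "mellin f a < \<infinity>"
  shows "mellin f a = ennreal (enn2real (mellin f a))" "enn2real (mellin f a) > 0"
    "prob_space (mellin_dist f a)"
proof -
  define m where "m = enn2real (mellin f a)"
  show me: "mellin f a = ennreal (enn2real (mellin f a))" using mp by (simp add: ennreal_enn2real_if)
  show mpos: "enn2real (mellin f a) > 0" using mp by (simp add: enn2real_positive_iff)
  show "prob_space (mellin_dist f a)"
  proof (rule prob_spaceI)
    have "emeasure (mellin_dist f a) (space (mellin_dist f a)) =
        (\<integral>\<^sup>+ x. ennreal (indicator {0<..} x * (x powr (a - 1) * f x) / m) \<partial>lborel)"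
      unfolding mellin_dist_def m_def by (subst emeasure_density) auto
    also have "\<dots> = (\<integral>\<^sup>+ x. ennreal (indicator {0<..} x * (x powr (a - 1) * f x)) * ennreal (1 / m) \<partial>lborel)"
    proof (intro nn_integral_cong)
      fix x :: real
      have nn: "0 \<le> indicator {0<..} x * (x powr (a - 1) * f x)" using mellin_F_nonneg[of f x a] fn by blast
      have mp': "0 \<le> 1 / m" using mpos m_def by simp
      have "ennreal (indicator {0<..} x * (x powr (a - 1) * f x) / m) = ennreal (indicator {0<..} x * (x powr (a - 1) * f x) * (1 / m))"
        by simp
      also have "\<dots> = ennreal (indicator {0<..} x * (x powr (a - 1) * f x)) * ennreal (1 / m)"
        by (rule ennreal_mult[OF nn mp'])
      finally show "ennreal (indicator {0<..} x * (x powr (a - 1) * f x) / m) = ennreal (indicator {0<..} x * (x powr (a - 1) * f x)) * ennreal (1 / m)" .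
    qed
    also have "\<dots> = mellin f a * ennreal (1 / m)"
      unfolding mellin_def by (rule nn_integral_multc) measurable
    also have "\<dots> = ennreal m * ennreal (1 / m)" using me[folded m_def] by simp
    also have "\<dots> = ennreal (m * (1 / m))" using mpos m_def by (subst ennreal_mult) auto
    also have "\<dots> = 1" using mpos m_def by simp
    finally show "emeasure (mellin_dist f a) (space (mellin_dist f a)) = 1" .
  qed
qed

lemma mellin_shift:
  fixes f :: "real \<Rightarrow> real"
  assumes fm[measurable]: "f \<in> borel_measurable borel" and fn: "\<And>x. 0 < x \<Longrightarrow> 0 \<le> f x"
    and mpa: "0 < mellin f a" "mellin f a < \<infinity>"
    and mpb: "0 < mellin f b" "mellin f b < \<infinity>"
  shows "mellin_dist f b = density (mellin_dist f a)
     (\<lambda>x. ennreal (exp ((b - a) * ln x) * (enn2real (mellin f a) / enn2real (mellin f b))))"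
proof -
  define ma where "ma = enn2real (mellin f a)"
  define mb where "mb = enn2real (mellin f b)"
  have ma: "ma > 0" using mellin_facts[OF fm fn mpa] by (simp add: ma_def)
  have mb: "mb > 0" using mellin_facts[OF fm fn mpb] by (simp add: mb_def)
  have "density (mellin_dist f a)
     (\<lambda>x. ennreal (exp ((b - a) * ln x) * (ma / mb))) =
     density lborel (\<lambda>x. ennreal (indicator {0<..} x * (x powr (a - 1) * f x) / ma) *
        ennreal (exp ((b - a) * ln x) * (ma / mb)))"
    unfolding mellin_dist_def ma_def by (rule density_density_eq) measurable
  also have "\<dots> = density lborel (\<lambda>x. ennreal (indicator {0<..} x * (x powr (b - 1) * f x) / mb))"
  proof (rule arg_cong[where f="density lborel"], rule ext)
    fix x :: real
    show "ennreal (indicator {0<..} x * (x powr (a - 1) * f x) / ma) *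
        ennreal (exp ((b - a) * ln x) * (ma / mb)) = ennreal (indicator {0<..} x * (x powr (b - 1) * f x) / mb)"
    proof (cases "0 < x")
      case True
      have "x powr (a - 1) * exp ((b - a) * ln x) = x powr (b - 1)"
        using True by (simp add: powr_def exp_add[symmetric] algebra_simps)
      then have eq: "x powr (a - 1) * f x / ma * (exp ((b - a) * ln x) * (ma / mb)) = x powr (b - 1) * f x / mb"
        using ma mb by (simp add: field_simps)
      have "0 \<le> x powr (a - 1) * f x / ma" using True fn ma by auto
      moreover have "0 \<le> exp ((b - a) * ln x) * (ma / mb)" using ma mb by auto
      ultimately have "ennreal (x powr (a - 1) * f x / ma) * ennreal (exp ((b - a) * ln x) * (ma / mb)) = ennreal (x powr (b - 1) * f x / mb)"
        unfolding eq[symmetric] by (rule ennreal_mult[symmetric])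
      then show ?thesis using True by simp
    next
      case False then show ?thesis by simp
    qed
  qed
  finally show ?thesis unfolding mellin_dist_def ma_def mb_def by simp
qed

lemma chain_shift:
  assumes "DERIV g (b - c) :> D"
  shows "DERIV (\<lambda>x. g (x - c)) b :> D"
proof -
  have "DERIV (\<lambda>x. x - c) b :> 1" by (auto intro!: derivative_eq_intros)
  from DERIV_chain2[OF assms this] show ?thesis by simp
qed

theorem lemmaB2:
  fixes r :: nat and f :: "nat \<Rightarrow> real \<Rightarrow> real" and a0 a1 :: real
    and A :: "(nat \<Rightarrow> real) \<Rightarrow> real"
  assumes f_meas: "\<And>k. k \<in> {1..r} \<Longrightarrow> f k \<in> borel_measurable borel"
    and f_nonneg: "\<And>k x. k \<in> {1..r} \<Longrightarrow> 0 < x \<Longrightarrow> 0 \<le> f k x"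
    and a_lt: "a0 < a1"
    and dom: "\<And>k. k \<in> {1..r} \<Longrightarrow> {a0..a1} \<subseteq> mellin_dom (f k)"
    and A_meas: "A \<in> borel_measurable (PiM {1..r} (\<lambda>_. borel))"
    and A_sq: "\<And>a. a \<in> {a0..a1} \<Longrightarrow> integrable (mellin_prod r f a) (\<lambda>x. (A x)\<^sup>2)"
  shows "(\<forall>a \<in> {a0<..<a1}.
            ((\<lambda>b. \<integral>x. A x \<partial>mellin_prod r f b) has_real_derivative
               covariance (mellin_prod r f a) A (\<lambda>x. \<Sum>k\<in>{1..r}. ln (x k))) (at a))
       \<and> continuous_on {a0<..<a1} (deriv (\<lambda>b. \<integral>x. A x \<partial>mellin_prod r f b))"
proof -
  define I where "I = {1..r}"
  define m where "m k b = enn2real (mellin (f k) b)" for k b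
  define P where "P k = mellin_dist (f k) a0" for k
  define N where "N = PiM I P"
  define S where "S x = (\<Sum>k\<in>I. ln (x k))" for x :: "nat \<Rightarrow> real"
  define Q where "Q b = (\<Prod>k\<in>I. m k a0 / m k b)" for b
  define L where "L = a1 - a0"
  define \<mu> where "\<mu> b = mellin_prod r f b" for b
  have L: "L > 0" using a_lt by (simp add: L_def)
  have finI: "finite I" by (simp add: I_def)
  have mfin: "0 < mellin (f k) b \<and> mellin (f k) b < \<infinity>" if "k \<in> I" "b \<in> {a0..a1}" for k b
    using dom[of k] that interior_subset unfolding I_def mellin_dom_def by blast
  have mpos: "m k b > 0" if "k \<in> I" "b \<in> {a0..a1}" for k b
    using mellin_facts(2)[OF f_meas f_nonneg] mfin[OF that] that unfolding m_def I_def by blast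
  have mprob: "prob_space (mellin_dist (f k) b)" if "k \<in> I" "b \<in> {a0..a1}" for k b
    using mellin_facts(3)[OF f_meas f_nonneg] mfin[OF that] that unfolding I_def by blast
  have Qpos: "Q b > 0" if "b \<in> {a0..a1}" for b
    unfolding Q_def using mpos that a_lt by (intro prod_pos) (auto intro!: divide_pos_pos)
  have sP: "sets (P k) = sets borel" for k by (simp add: P_def mellin_dist_def)
  have sN: "sets N = sets (PiM I (\<lambda>_. borel))" unfolding N_def by (rule sets_PiM_cong) (auto simp: sP)
  have A_N[measurable]: "A \<in> borel_measurable N"
    using A_meas measurable_cong_sets[OF sN refl] unfolding I_def by blast
  have "S \<in> borel_measurable (PiM I (\<lambda>_. borel))" unfolding S_def by measurable
  then have S_N[measurable]: "S \<in> borel_measurable N"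
    using measurable_cong_sets[OF sN refl] by blast
  have probN: "prob_space N" unfolding N_def P_def using mprob a_lt by (intro prob_space_PiM) auto
  have mu_eq: "\<mu> b = density N (\<lambda>x. ennreal (Q b * exp ((b - a0) * S x)))" if b: "b \<in> {a0..a1}" for b
  proof -
    define h where "h k x = ennreal (exp ((b - a0) * ln x) * (m k a0 / m k b))" for k x
    have "\<mu> b = PiM I (\<lambda>k. density (P k) (h k))"
      unfolding \<mu>_def mellin_prod_def I_def[symmetric]
    proof (rule PiM_cong)
      fix k assume k: "k \<in> I"
      show "mellin_dist (f k) b = density (P k) (h k)"
        unfolding P_def h_def m_def
        using k b a_lt f_meas f_nonneg mfin
        by (intro mellin_shift) (auto simp: I_def)
    qed simp
    also have "\<dots> = density N (\<lambda>x. \<Prod>k\<in>I. h k (x k))"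
      unfolding N_def
    proof (rule PiM_density[OF finI])
      show "prob_space (P k)" if "k \<in> I" for k using mprob that a_lt by (simp add: P_def)
      show "h k \<in> borel_measurable (P k)" for k
        unfolding measurable_cong_sets[OF sP refl] h_def by measurable
      show "prob_space (density (P k) (h k))" if k: "k \<in> I" for k
      proof -
        have "mellin_dist (f k) b = density (P k) (h k)"
          unfolding P_def h_def m_def
          using k b a_lt f_meas f_nonneg mfin
          by (intro mellin_shift) (auto simp: I_def)
        then show ?thesis using mprob[OF k b] by simp
      qed
    qed
    also have "\<dots> = density N (\<lambda>x. ennreal (Q b * exp ((b - a0) * S x)))"
    proof (rule arg_cong[where f="density N"], rule ext)
      fix x :: "nat \<Rightarrow> real"
      have "(\<Prod>k\<in>I. h k (x k)) = ennreal (\<Prod>k\<in>I. exp ((b - a0) * ln (x k)) * (m k a0 / m k b))"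
        unfolding h_def using mpos b a_lt by (intro prod_ennreal) (auto intro!: mult_nonneg_nonneg divide_nonneg_nonneg less_imp_le)
      also have "(\<Prod>k\<in>I. exp ((b - a0) * ln (x k)) * (m k a0 / m k b)) = Q b * exp ((b - a0) * S x)"
        unfolding Q_def S_def prod.distrib sum_distrib_left exp_sum[OF finI] by simp
      finally show "(\<Prod>k\<in>I. h k (x k)) = ennreal (Q b * exp ((b - a0) * S x))" .
    qed
    finally show ?thesis .
  qed
  have int_iff: "integrable (\<mu> b) g \<longleftrightarrow> integrable N (\<lambda>x. g x * exp ((b - a0) * S x))"
    if b: "b \<in> {a0..a1}" and g[measurable]: "g \<in> borel_measurable N" for b g
  proof -
    have "integrable (\<mu> b) g \<longleftrightarrow> integrable N (\<lambda>x. (Q b * exp ((b - a0) * S x)) *\<^sub>R g x)"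
      unfolding mu_eq[OF b] using Qpos[OF b] by (intro integrable_density) auto
    also have "\<dots> \<longleftrightarrow> integrable N (\<lambda>x. Q b * (g x * exp ((b - a0) * S x)))"
      by (simp add: ac_simps)
    also have "\<dots> \<longleftrightarrow> integrable N (\<lambda>x. g x * exp ((b - a0) * S x))"
      using Qpos[OF b] by simp
    finally show ?thesis .
  qed
  have int_eq: "(\<integral>x. g x \<partial>\<mu> b) = Q b * (\<integral>x. g x * exp ((b - a0) * S x) \<partial>N)"
    if b: "b \<in> {a0..a1}" and g[measurable]: "g \<in> borel_measurable N" for b g
  proof -
    have "(\<integral>x. g x \<partial>\<mu> b) = (\<integral>x. (Q b * exp ((b - a0) * S x)) *\<^sub>R g x \<partial>N)"
      unfolding mu_eq[OF b] using Qpos[OF b] by (intro integral_density) auto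
    also have "\<dots> = (\<integral>x. Q b * (g x * exp ((b - a0) * S x)) \<partial>N)"
      by (simp add: ac_simps)
    also have "\<dots> = Q b * (\<integral>x. g x * exp ((b - a0) * S x) \<partial>N)"
      by simp
    finally show ?thesis .
  qed
  have mu_prob: "prob_space (\<mu> b)" if "b \<in> {a0..a1}" for b
    unfolding \<mu>_def mellin_prod_def using mprob that by (intro prob_space_PiM) (auto simp: I_def)
  define G where "G w t = (\<integral>x. w x * exp (t * S x) \<partial>N)" for w :: "(nat \<Rightarrow> real) \<Rightarrow> real" and t
  have norm1: "Q b * G (\<lambda>_. 1) (b - a0) = 1" if b: "b \<in> {a0..a1}" for b
  proof -
    interpret prob_space "\<mu> b" by (rule mu_prob[OF b])
    have "(\<integral>x. (1::real) \<partial>\<mu> b) = 1" using prob_space by (simp add: lebesgue_integral_const)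
    then show ?thesis using int_eq[OF b, of "\<lambda>_. 1"] by (simp add: G_def)
  qed
  have G1pos: "G (\<lambda>_. 1) (b - a0) > 0" if b: "b \<in> {a0..a1}" for b
  proof -
    have "G (\<lambda>_. 1) (b - a0) = 1 / Q b" using norm1[OF b] Qpos[OF b] by (simp add: eq_divide_eq mult.commute)
    then show ?thesis using Qpos[OF b] by simp
  qed
  have Qinv: "Q b = 1 / G (\<lambda>_. 1) (b - a0)" if b: "b \<in> {a0..a1}" for b
    using norm1[OF b] G1pos[OF b] by (simp add: field_simps)
  have iA: "integrable N (\<lambda>x. \<bar>A x\<bar> * exp (t * S x))" if t: "t \<in> {0, L}" for t
  proof -
    have b: "a0 + t \<in> {a0..a1}" using t L by (auto simp: L_def)
    have fm: "finite_measure (\<mu> (a0 + t))" using mu_prob[OF b] by (rule prob_space.axioms(1))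
    have sq: "integrable (\<mu> (a0 + t)) (\<lambda>x. (A x)\<^sup>2)" using A_sq[OF b] unfolding \<mu>_def .
    have meas: "A \<in> borel_measurable (\<mu> (a0 + t))"
      unfolding mu_eq[OF b] measurable_density_eq1 by (rule A_N)
    have "integrable (\<mu> (a0 + t)) A" by (rule finite_measure.square_integrable_imp_integrable[OF fm meas sq])
    then have "integrable (\<mu> (a0 + t)) (\<lambda>x. \<bar>A x\<bar>)" by (rule integrable_abs)
    then have "integrable N (\<lambda>x. \<bar>A x\<bar> * exp ((a0 + t - a0) * S x))"
      using int_iff[OF b, of "\<lambda>x. \<bar>A x\<bar>"] by simp
    then show ?thesis by simp
  qed
  have i1: "integrable N (\<lambda>x. \<bar>1::real\<bar> * exp (t * S x))" if t: "t \<in> {0, L}" for t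
  proof -
    have b: "a0 + t \<in> {a0..a1}" using t L by (auto simp: L_def)
    have fm: "finite_measure (\<mu> (a0 + t))" using mu_prob[OF b] by (rule prob_space.axioms(1))
    have "integrable (\<mu> (a0 + t)) (\<lambda>_. 1::real)" using fm by (rule finite_measure.integrable_const)
    then have "integrable N (\<lambda>x. 1 * exp ((a0 + t - a0) * S x))"
      using int_iff[OF b, of "\<lambda>_. 1"] by simp
    then show ?thesis by simp
  qed
  have m1[measurable]: "(\<lambda>_. 1::real) \<in> borel_measurable N" by simp
  have iA0: "integrable N (\<lambda>x. \<bar>A x\<bar> * exp (0 * S x))" using iA[of 0] by simp
  have iAL: "integrable N (\<lambda>x. \<bar>A x\<bar> * exp (L * S x))" using iA[of L] by simp
  have i10: "integrable N (\<lambda>x. \<bar>1::real\<bar> * exp (0 * S x))" using i1[of 0] by simp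
  have i1L: "integrable N (\<lambda>x. \<bar>1::real\<bar> * exp (L * S x))" using i1[of L] by simp
  have dA: "DERIV (G A) c :> G (\<lambda>x. A x * S x) c" if "0 < c" "c < L" for c
    unfolding G_def by (rule deriv_int[OF A_N S_N iA0 iAL that])
  have d1: "DERIV (G (\<lambda>_. 1)) c :> G (\<lambda>x. 1 * S x) c" if "0 < c" "c < L" for c
    unfolding G_def by (rule deriv_int[OF m1 S_N i10 i1L that])
  have iAS: "integrable N (\<lambda>x. \<bar>A x * S x\<bar> * exp (t * S x))" if "0 < t" "t < L" for t
    by (rule intS[OF A_N S_N iA0 iAL that])
  have iS: "integrable N (\<lambda>x. \<bar>1 * S x\<bar> * exp (t * S x))" if "0 < t" "t < L" for t
    by (rule intS[OF m1 S_N i10 i1L that])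
  have AS_N[measurable]: "(\<lambda>x. A x * S x) \<in> borel_measurable N" by measurable
  have S1_N[measurable]: "(\<lambda>x. 1 * S x) \<in> borel_measurable N" by measurable
  have dAS: "DERIV (G (\<lambda>x. A x * S x)) c :> G (\<lambda>x. A x * S x * S x) c" if "0 < c" "c < L" for c
  proof -
    have h: "0 < c / 2" "c / 2 < L" "0 < (c + L) / 2" "(c + L) / 2 < L" "c / 2 < c" "c < (c + L) / 2" using that by auto
    show ?thesis
      unfolding G_def by (rule deriv_int[OF AS_N S_N iAS[OF h(1,2)] iAS[OF h(3,4)] h(5,6)])
  qed
  have dS: "DERIV (G (\<lambda>x. 1 * S x)) c :> G (\<lambda>x. 1 * S x * S x) c" if "0 < c" "c < L" for c
  proof -
    have h: "0 < c / 2" "c / 2 < L" "0 < (c + L) / 2" "(c + L) / 2 < L" "c / 2 < c" "c < (c + L) / 2" using that by auto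
    show ?thesis
      unfolding G_def by (rule deriv_int[OF S1_N S_N iS[OF h(1,2)] iS[OF h(3,4)] h(5,6)])
  qed
  define E where "E b = G A (b - a0) / G (\<lambda>_. 1) (b - a0)" for b
  define Fd where "Fd b = (G (\<lambda>x. A x * S x) (b - a0) * G (\<lambda>_. 1) (b - a0) - G A (b - a0) * G (\<lambda>x. 1 * S x) (b - a0))
       / (G (\<lambda>_. 1) (b - a0) * G (\<lambda>_. 1) (b - a0))" for b
  have E_eq: "(\<integral>x. A x \<partial>\<mu> b) = E b" if b: "b \<in> {a0..a1}" for b
    using int_eq[OF b A_N] Qinv[OF b] by (simp add: E_def G_def)
  have dE: "DERIV E b :> Fd b" if b: "b \<in> {a0<..<a1}" for b
  proof -
    have c: "0 < b - a0" "b - a0 < L" using b by (auto simp: L_def)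
    show ?thesis unfolding E_def Fd_def
      by (rule DERIV_divide[OF chain_shift[OF dA[OF c]] chain_shift[OF d1[OF c]]])
         (use G1pos[of b] b in auto)
  qed
  have dmain: "DERIV (\<lambda>b. \<integral>x. A x \<partial>\<mu> b) b :> Fd b" if b: "b \<in> {a0<..<a1}" for b
    by (rule has_field_derivative_transform_within_open[OF dE[OF b], of "{a0<..<a1}"])
       (use b E_eq in auto)
  have cov: "covariance (\<mu> b) A S = Fd b" if b: "b \<in> {a0<..<a1}" for b
  proof -
    define c where "c = b - a0"
    have bc: "b \<in> {a0..a1}" using b by auto
    have c: "0 < c" "c < L" using b by (auto simp: c_def L_def)
    define g1 where "g1 = G (\<lambda>_. 1) c"
    have g1: "g1 > 0" using G1pos[OF bc] by (simp add: g1_def c_def)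
    interpret prob_space "\<mu> b" by (rule mu_prob[OF bc])
    have intA: "integrable (\<mu> b) A"
      using int_iff[OF bc A_N] int_between'[OF A_N S_N iA0 iAL, of c] c by (simp add: c_def)
    have mS: "(\<lambda>x. 1 * S x * exp (c * S x)) \<in> borel_measurable N" by measurable
    have "integrable N (\<lambda>x. \<bar>1 * S x * exp (c * S x)\<bar>)" using iS[OF c] by (simp add: abs_mult)
    then have "integrable N (\<lambda>x. 1 * S x * exp (c * S x))" using integrable_abs_iff[OF mS] by blast
    then have intSm: "integrable (\<mu> b) S"
      using int_iff[OF bc S_N] by (simp add: c_def)
    have mAS: "(\<lambda>x. A x * S x * exp (c * S x)) \<in> borel_measurable N" by measurable
    have "integrable N (\<lambda>x. \<bar>A x * S x * exp (c * S x)\<bar>)" using iAS[OF c] by (simp add: abs_mult)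
    then have "integrable N (\<lambda>x. A x * S x * exp (c * S x))" using integrable_abs_iff[OF mAS] by blast
    then have intAS: "integrable (\<mu> b) (\<lambda>x. A x * S x)"
      using int_iff[OF bc AS_N] by (simp add: c_def)
    have eA: "(\<integral>x. A x \<partial>\<mu> b) = G A c / g1"
      using int_eq[OF bc A_N] Qinv[OF bc] by (simp add: G_def g1_def c_def)
    have eS: "(\<integral>x. S x \<partial>\<mu> b) = G (\<lambda>x. 1 * S x) c / g1"
      using int_eq[OF bc S_N] Qinv[OF bc] by (simp add: G_def g1_def c_def)
    have eAS: "(\<integral>x. A x * S x \<partial>\<mu> b) = G (\<lambda>x. A x * S x) c / g1"
      using int_eq[OF bc AS_N] Qinv[OF bc] by (simp add: G_def g1_def c_def)
    define mA where "mA = (\<integral>x. A x \<partial>\<mu> b)"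
    define mS where "mS = (\<integral>x. S x \<partial>\<mu> b)"
    have "covariance (\<mu> b) A S = (\<integral>x. (A x * S x - mS * A x) - (mA * S x - mA * mS) \<partial>\<mu> b)"
      unfolding covariance_def mA_def[symmetric] mS_def[symmetric]
      by (intro Bochner_Integration.integral_cong) (auto simp: algebra_simps)
    also have "\<dots> = (\<integral>x. A x * S x - mS * A x \<partial>\<mu> b) - (\<integral>x. mA * S x - mA * mS \<partial>\<mu> b)"
      using intA intSm intAS by (intro Bochner_Integration.integral_diff) auto
    also have "(\<integral>x. A x * S x - mS * A x \<partial>\<mu> b) = (\<integral>x. A x * S x \<partial>\<mu> b) - mS * mA"
      using intA intAS unfolding mA_def by (subst Bochner_Integration.integral_diff) auto
    also have "(\<integral>x. mA * S x - mA * mS \<partial>\<mu> b) = mA * mS - mA * mS"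
      using intSm unfolding mS_def by (subst Bochner_Integration.integral_diff) (auto simp: lebesgue_integral_const prob_space)
    finally have "covariance (\<mu> b) A S = (\<integral>x. A x * S x \<partial>\<mu> b) - mS * mA" by simp
    also have "\<dots> = Fd b"
      unfolding eAS mS_def mA_def eA eS Fd_def c_def[symmetric] g1_def[symmetric]
      using g1 by (simp add: field_simps)
    finally show ?thesis .
  qed
  have cont: "continuous_on {a0<..<a1} Fd"
  proof (rule continuous_at_imp_continuous_on, rule ballI)
    fix b assume b: "b \<in> {a0<..<a1}"
    have bc: "b \<in> {a0..a1}" using b by auto
    have c: "0 < b - a0" "b - a0 < L" using b by (auto simp: L_def)
    have c1: "isCont (\<lambda>b. G A (b - a0)) b" by (rule DERIV_isCont[OF chain_shift[OF dA[OF c]]])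
    have c2: "isCont (\<lambda>b. G (\<lambda>_. 1) (b - a0)) b" by (rule DERIV_isCont[OF chain_shift[OF d1[OF c]]])
    have c3: "isCont (\<lambda>b. G (\<lambda>x. A x * S x) (b - a0)) b" by (rule DERIV_isCont[OF chain_shift[OF dAS[OF c]]])
    have c4: "isCont (\<lambda>b. G (\<lambda>x. 1 * S x) (b - a0)) b" by (rule DERIV_isCont[OF chain_shift[OF dS[OF c]]])
    have nz: "G (\<lambda>_. 1) (b - a0) * G (\<lambda>_. 1) (b - a0) \<noteq> 0" using G1pos[OF bc] by simp
    show "isCont Fd b" unfolding Fd_def
      by (intro continuous_divide continuous_diff continuous_mult c1 c2 c3 c4) (use nz in simp)
  qed
  show ?thesis
  proof
    show "\<forall>a\<in>{a0<..<a1}. ((\<lambda>b. \<integral>x. A x \<partial>mellin_prod r f b) has_real_derivative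
            covariance (mellin_prod r f a) A (\<lambda>x. \<Sum>k\<in>{1..r}. ln (x k))) (at a)"
      using dmain cov unfolding \<mu>_def S_def I_def by (auto simp: fun_eq_iff)
    have "continuous_on {a0<..<a1} (deriv (\<lambda>b. \<integral>x. A x \<partial>\<mu> b))"
    proof -
      have "\<And>x. x \<in> {a0<..<a1} \<Longrightarrow> Fd x = deriv (\<lambda>b. \<integral>x. A x \<partial>\<mu> b) x"
        using DERIV_imp_deriv dmain by metis
      then show ?thesis using cont continuous_on_cong[of "{a0<..<a1}" "{a0<..<a1}" Fd] by blast
    qed
    then show "continuous_on {a0<..<a1} (deriv (\<lambda>b. \<integral>x. A x \<partial>mellin_prod r f b))"
      unfolding \<mu>_def .
  qed
qed

end
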